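(* There exists a family $(C_n)_{n\ge1}$, where $C_n$ is a circuit on $n$ qubits composed of controlled-not gates and one-qubit diagonal gates, with the following property: for every polynomial $p$ there is a polynomial $q$ such that for all $n$, every quantum circuit in which the operator computed by $C_n$ is embedded using at most $p(n)$ ancillae has depth at least $2^n/q(n)$. In other words, these circuits cannot be parallelized to less than exponential depth with a polynomial number of ancillae.
   Context: Qubits have computational basis $|0\rangle,|1\rangle$. The controlled-not gate is $|a,b\rangle\mapsto|a,a\oplus b\rangle$; a one-qubit diagonal gate is $\mathrm{diag}(e^{i\alpha},e^{i\beta})$ on a single qubit. A one-layer circuit is a tensor product of arbitrary one-qubit and two-qubit unitary gates acting on pairwise disjoint sets of qubits; a quantum circuit of depth $d$ is a product of $d$ one-layer circuits. An operator $F$ on $n$ qubits is embedded in an operator $M$ on $n+m$ qubits using $m$ ancillae if $M(|\psi\rangle\otimes|0\cdots0\rangle)=(F|\psi\rangle)\otimes|0\cdots0\rangle$ for all $|\psi\rangle$. *)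

theory Defs
  imports Complex_Main "HOL-Computational_Algebra.Polynomial"
begin

text \<open>Computational basis states of N qubits (qubits 0..N-1): bit assignments
  nat => bool that are False outside {0..<N}.\<close>

type_synonym bits = "nat \<Rightarrow> bool"
type_synonym qop = "bits \<Rightarrow> bits \<Rightarrow> complex"
type_synonym qvec = "bits \<Rightarrow> complex"

definition basis_on :: "nat set \<Rightarrow> bits set" where
  "basis_on S = {x. \<forall>k. x k \<longrightarrow> k \<in> S}"

abbreviation basis :: "nat \<Rightarrow> bits set" where
  "basis N \<equiv> basis_on {..<N}"

definition idm :: qop where
  "idm x y = (if x = y then 1 else 0)"

definition matmul :: "nat \<Rightarrow> qop \<Rightarrow> qop \<Rightarrow> qop" where
  "matmul N A B x y = (\<Sum>z\<in>basis N. A x z * B z y)"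

definition apply_op :: "nat \<Rightarrow> qop \<Rightarrow> qvec \<Rightarrow> qvec" where
  "apply_op N A v x = (\<Sum>y\<in>basis N. A x y * v y)"

definition unitary_on :: "bits set \<Rightarrow> qop \<Rightarrow> bool" where
  "unitary_on A U \<longleftrightarrow> (\<forall>x\<in>A. \<forall>y\<in>A.
     (\<Sum>z\<in>A. cnj (U z x) * U z y) = (if x = y then 1 else 0))"

text \<open>Arbitrary gate: a unitary U acting on the qubits in S (U indexed by bit
  assignments supported in S), extended by the identity on all other qubits.\<close>

definition restr :: "nat set \<Rightarrow> bits \<Rightarrow> bits" where
  "restr S x = (\<lambda>k. k \<in> S \<and> x k)"

definition gate_mat :: "nat set \<times> qop \<Rightarrow> qop" where
  "gate_mat g x y = (let (S, U) = g in
     if (\<forall>k. k \<notin> S \<longrightarrow> x k = y k) then U (restr S x) (restr S y) else 0)"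

definition valid_gate :: "nat \<Rightarrow> nat set \<times> qop \<Rightarrow> bool" where
  "valid_gate N g \<longleftrightarrow> (let (S, U) = g in
     S \<noteq> {} \<and> card S \<le> 2 \<and> S \<subseteq> {..<N} \<and> unitary_on (basis_on S) U)"

definition layer_ok :: "nat \<Rightarrow> (nat set \<times> qop) list \<Rightarrow> bool" where
  "layer_ok N gs \<longleftrightarrow> (\<forall>g\<in>set gs. valid_gate N g) \<and>
     (\<forall>i<length gs. \<forall>j<length gs. i \<noteq> j \<longrightarrow> fst (gs ! i) \<inter> fst (gs ! j) = {})"

definition layer_op :: "nat \<Rightarrow> (nat set \<times> qop) list \<Rightarrow> qop" where
  "layer_op N gs = foldr (\<lambda>g A. matmul N (gate_mat g) A) gs idm"

definition circuit_of_depth :: "nat \<Rightarrow> nat \<Rightarrow> qop \<Rightarrow> bool" where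
  "circuit_of_depth N d M \<longleftrightarrow> (\<exists>Ls. length Ls = d \<and> (\<forall>L\<in>set Ls. layer_ok N L) \<and>
     (\<forall>x\<in>basis N. \<forall>y\<in>basis N.
        M x y = foldr (\<lambda>L A. matmul N (layer_op N L) A) Ls idm x y))"

text \<open>Embedding of an n-qubit operator F into an (n+m)-qubit operator M, ancillae
  being qubits n..n+m-1:  M(psi \<otimes> |0..0>) = (F psi) \<otimes> |0..0>.\<close>

definition zext :: "nat \<Rightarrow> qvec \<Rightarrow> qvec" where
  "zext n v y = (if y \<in> basis n then v y else 0)"

definition embeds :: "nat \<Rightarrow> nat \<Rightarrow> qop \<Rightarrow> qop \<Rightarrow> bool" where
  "embeds n m F M \<longleftrightarrow> (\<forall>\<psi>. \<forall>x\<in>basis (n + m).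
     apply_op (n + m) M (zext n \<psi>) x = zext n (apply_op n F \<psi>) x)"

datatype cgate = CNOT nat nat | Diag nat real real

fun cgate_ok :: "nat \<Rightarrow> cgate \<Rightarrow> bool" where
  "cgate_ok n (CNOT a b) \<longleftrightarrow> a < n \<and> b < n \<and> a \<noteq> b"
| "cgate_ok n (Diag i \<alpha> \<beta>) \<longleftrightarrow> i < n"

text \<open>CNOT with control a, target b: |..x_a..x_b..> \<mapsto> |..x_a..(x_a xor x_b)..>;
  Diag i \<alpha> \<beta> = diag(e^{i\<alpha>}, e^{i\<beta>}) on qubit i.\<close>

fun cgate_mat :: "cgate \<Rightarrow> qop" where
  "cgate_mat (CNOT a b) x y =
     (if (\<forall>k. k \<noteq> b \<longrightarrow> x k = y k) \<and> x b = (y a \<noteq> y b) then 1 else 0)"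
| "cgate_mat (Diag i \<alpha> \<beta>) x y =
     (if x = y then (if x i then exp (\<i> * of_real \<beta>) else exp (\<i> * of_real \<alpha>)) else 0)"

definition cnot_diag_circuit :: "nat \<Rightarrow> cgate list \<Rightarrow> bool" where
  "cnot_diag_circuit n gs \<longleftrightarrow> (\<forall>g\<in>set gs. cgate_ok n g)"

definition cop :: "nat \<Rightarrow> cgate list \<Rightarrow> qop" where
  "cop n gs = foldr (\<lambda>g A. matmul n (cgate_mat g) A) gs idm"

end

theory Submission
  imports Defs "HOL-Library.FuncSet"
begin

section \<open>Basis facts\<close>

lemma basis_on_sub: "basis_on S \<subseteq> (\<lambda>A k. k \<in> A) ` Pow S"
proof
  fix x assume "x \<in> basis_on S"
  hence "{k. x k} \<in> Pow S" and "x = (\<lambda>k. k \<in> {k. x k})" by (auto simp: basis_on_def)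
  thus "x \<in> (\<lambda>A k. k \<in> A) ` Pow S" by blast
qed

lemma finite_basis_on: "finite S \<Longrightarrow> finite (basis_on S)"
  using basis_on_sub by (meson finite_Pow_iff finite_imageI finite_subset)

lemma card_basis_on_le: "finite S \<Longrightarrow> card (basis_on S) \<le> 2 ^ card S"
proof -
  assume f: "finite S"
  have "card (basis_on S) \<le> card ((\<lambda>A k. k \<in> A) ` Pow S)"
    by (rule card_mono) (use basis_on_sub f in auto)
  also have "\<dots> \<le> card (Pow S)" by (rule card_image_le) (use f in simp)
  also have "\<dots> = 2 ^ card S" using f by (simp add: card_Pow)
  finally show ?thesis .
qed

lemma finite_basis: "finite (basis N)" by (simp add: finite_basis_on)

lemma basis_mono: "n \<le> N \<Longrightarrow> x \<in> basis n \<Longrightarrow> x \<in> basis N"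
  by (auto simp: basis_on_def)

lemma basis_Suc: "basis (Suc n) = basis n \<union> (\<lambda>x. x(n := True)) ` basis n"
proof
  show "basis (Suc n) \<subseteq> basis n \<union> (\<lambda>x. x(n := True)) ` basis n"
  proof
    fix x assume x: "x \<in> basis (Suc n)"
    show "x \<in> basis n \<union> (\<lambda>x. x(n := True)) ` basis n"
    proof (cases "x n")
      case True
      have "x = (x(n := False))(n := True)" using True by (auto simp: fun_eq_iff)
      moreover have "x(n := False) \<in> basis n" using x by (auto simp: basis_on_def less_Suc_eq)
      ultimately show ?thesis by blast
    next
      case False
      hence "x \<in> basis n" using x by (auto simp: basis_on_def less_Suc_eq)
      thus ?thesis by blast
    qed
  qed
next
  show "basis n \<union> (\<lambda>x. x(n := True)) ` basis n \<subseteq> basis (Suc n)"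
    by (auto simp: basis_on_def split: if_splits)
qed

definition chi :: "nat \<Rightarrow> (nat \<Rightarrow> bool) \<Rightarrow> bits \<Rightarrow> real" where
  "chi n u x = prod_list (map (\<lambda>k. if u k \<and> x k then -1 else 1) [0..<n])"

lemma chi_upd: "x \<in> basis n \<Longrightarrow> chi n u (x(n := True)) = chi n u x"
  unfolding chi_def by (intro arg_cong[where f=prod_list] map_cong) auto

lemma chi_Suc: "chi (Suc n) u x = chi n u x * (if u n \<and> x n then -1 else 1)"
  unfolding chi_def by simp

lemma sum_chi: "(\<Sum>x\<in>basis n. chi n u x) = (if \<forall>k<n. \<not> u k then 2 ^ n else 0)"
proof (induction n)
  case 0
  have "basis 0 = {\<lambda>_. False}" by (auto simp: basis_on_def)
  thus ?case by (simp add: chi_def)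
next
  case (Suc n)
  have inj: "inj_on (\<lambda>x. x(n := True)) (basis n)"
  proof (rule inj_onI)
    fix x y assume xy: "x \<in> basis n" "y \<in> basis n" "x(n := True) = y(n := True)"
    show "x = y"
    proof
      fix k show "x k = y k"
        using xy(1,2) fun_cong[OF xy(3), of k] by (cases "k = n") (auto simp: basis_on_def)
    qed
  qed
  have disj: "basis n \<inter> (\<lambda>x. x(n := True)) ` basis n = {}" by (force simp: basis_on_def)
  have fin: "finite (basis n)" by (rule finite_basis)
  have "(\<Sum>x\<in>basis (Suc n). chi (Suc n) u x) =
        (\<Sum>x\<in>basis n. chi (Suc n) u x) + (\<Sum>x\<in>(\<lambda>x. x(n := True)) ` basis n. chi (Suc n) u x)"
    unfolding basis_Suc by (rule sum.union_disjoint) (use fin disj in auto)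
  also have "(\<Sum>x\<in>basis n. chi (Suc n) u x) = (\<Sum>x\<in>basis n. chi n u x)"
    by (rule sum.cong) (auto simp: chi_Suc basis_on_def)
  also have "(\<Sum>x\<in>(\<lambda>x. x(n := True)) ` basis n. chi (Suc n) u x)
      = (\<Sum>x\<in>basis n. chi (Suc n) u (x(n := True)))"
    by (rule sum.reindex[OF inj, unfolded comp_def])
  also have "\<dots> = (\<Sum>x\<in>basis n. chi n u x * (if u n then -1 else 1))"
    by (rule sum.cong) (auto simp: chi_Suc chi_upd)
  also have "\<dots> = (\<Sum>x\<in>basis n. chi n u x) * (if u n then -1 else 1)"
    by (simp add: sum_distrib_right)
  finally show ?case using Suc.IH by (auto simp: less_Suc_eq)
qed

lemma prod_list_ones: "(\<Prod>k\<leftarrow>xs. (1::real)) = 1"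
  by (induction xs) auto

lemma card_basis: "card (basis n) = 2 ^ n"
proof -
  have "real (card (basis n)) = (\<Sum>x\<in>basis n. chi n (\<lambda>_. False) x)"
    by (simp add: chi_def prod_list_ones)
  also have "\<dots> = 2 ^ n" by (simp add: sum_chi)
  finally show ?thesis by (metis of_nat_eq_of_nat_power_cancel_iff of_nat_numeral)
qed

lemma chi_mult: "chi n u x * chi n v x = chi n (\<lambda>k. u k \<noteq> v k) x"
  unfolding chi_def by (induction n) auto

lemma abs_chi: "\<bar>chi n u x\<bar> = 1"
  unfolding chi_def by (induction n) (auto simp: abs_mult)

definition eqon :: "nat \<Rightarrow> qop \<Rightarrow> qop \<Rightarrow> bool" where
  "eqon N A B \<longleftrightarrow> (\<forall>x\<in>basis N. \<forall>y\<in>basis N. A x y = B x y)"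

definition mp :: "nat \<Rightarrow> qop list \<Rightarrow> qop" where
  "mp N As = foldr (matmul N) As idm"

lemma matmul_assoc: "matmul N (matmul N A B) C = matmul N A (matmul N B C)"
proof (intro ext)
  fix x y
  have "matmul N (matmul N A B) C x y = (\<Sum>z\<in>basis N. \<Sum>w\<in>basis N. A x w * B w z * C z y)"
    unfolding matmul_def by (simp add: sum_distrib_right)
  also have "\<dots> = (\<Sum>w\<in>basis N. \<Sum>z\<in>basis N. A x w * B w z * C z y)" by (rule sum.swap)
  also have "\<dots> = matmul N A (matmul N B C) x y"
    unfolding matmul_def by (simp add: sum_distrib_left mult.assoc)
  finally show "matmul N (matmul N A B) C x y = matmul N A (matmul N B C) x y" .
qed

lemma matmul_idm_left: "x \<in> basis N \<Longrightarrow> matmul N idm B x y = B x y"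
  unfolding matmul_def idm_def by (simp add: if_distrib[of "\<lambda>t. t * _"] finite_basis cong: if_cong)

lemma matmul_cong_right: "eqon N B B' \<Longrightarrow> y \<in> basis N \<Longrightarrow> matmul N A B x y = matmul N A B' x y"
  unfolding matmul_def eqon_def by (intro sum.cong) auto

lemma matmul_cong_left: "eqon N A A' \<Longrightarrow> x \<in> basis N \<Longrightarrow> matmul N A B x y = matmul N A' B x y"
  unfolding matmul_def eqon_def by (intro sum.cong) auto

lemma eqon_trans: "eqon N A B \<Longrightarrow> eqon N B C \<Longrightarrow> eqon N A C"
  unfolding eqon_def by auto

lemma mp_Cons: "mp N (A # As) = matmul N A (mp N As)" by (simp add: mp_def)
lemma mp_Nil: "mp N [] = idm" by (simp add: mp_def)

lemma mp_append: "eqon N (mp N (As @ Bs)) (matmul N (mp N As) (mp N Bs))"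
proof (induction As)
  case Nil
  then show ?case by (simp add: eqon_def mp_Nil matmul_idm_left)
next
  case (Cons A As)
  show ?case unfolding eqon_def
  proof (intro ballI)
    fix x y assume xy: "x \<in> basis N" "y \<in> basis N"
    have "mp N ((A # As) @ Bs) x y = matmul N A (mp N (As @ Bs)) x y" by (simp add: mp_Cons)
    also have "\<dots> = matmul N A (matmul N (mp N As) (mp N Bs)) x y"
      by (rule matmul_cong_right[OF Cons.IH xy(2)])
    also have "\<dots> = matmul N (mp N (A # As)) (mp N Bs) x y" by (simp add: mp_Cons matmul_assoc)
    finally show "mp N ((A # As) @ Bs) x y = matmul N (mp N (A # As)) (mp N Bs) x y" .
  qed
qed

lemma mp_concat: "eqon N (mp N (map (mp N) Ass)) (mp N (concat Ass))"
proof (induction Ass)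
  case Nil
  then show ?case by (simp add: eqon_def)
next
  case (Cons As Ass)
  show ?case unfolding eqon_def
  proof (intro ballI)
    fix x y assume xy: "x \<in> basis N" "y \<in> basis N"
    have "mp N (map (mp N) (As # Ass)) x y = matmul N (mp N As) (mp N (map (mp N) Ass)) x y"
      by (simp add: mp_Cons)
    also have "\<dots> = matmul N (mp N As) (mp N (concat Ass)) x y"
      by (rule matmul_cong_right[OF Cons.IH xy(2)])
    also have "\<dots> = mp N (As @ concat Ass) x y"
      using mp_append[of N As "concat Ass"] xy by (simp add: eqon_def)
    finally show "mp N (map (mp N) (As # Ass)) x y = mp N (concat (As # Ass)) x y" by simp
  qed
qed

lemma circuit_flat:
  "eqon N (foldr (\<lambda>L A. matmul N (layer_op N L) A) Ls idm) (mp N (map gate_mat (concat Ls)))"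
proof -
  have "foldr (\<lambda>L A. matmul N (layer_op N L) A) Ls idm = mp N (map (mp N) (map (map gate_mat) Ls))"
    unfolding mp_def layer_op_def by (induction Ls) (auto simp: foldr_map comp_def)
  moreover have "concat (map (map gate_mat) Ls) = map gate_mat (concat Ls)" by (simp add: map_concat)
  ultimately show ?thesis using mp_concat[of N "map (map gate_mat) Ls"] by simp
qed

section \<open>Bounds\<close>

definition bnd :: "nat \<Rightarrow> real \<Rightarrow> qop \<Rightarrow> bool" where
  "bnd N c A \<longleftrightarrow> (\<forall>x\<in>basis N. \<forall>y\<in>basis N. cmod (A x y) \<le> c)"

definition cls :: "nat \<Rightarrow> real \<Rightarrow> qop \<Rightarrow> qop \<Rightarrow> bool" where
  "cls N e A B \<longleftrightarrow> (\<forall>x\<in>basis N. \<forall>y\<in>basis N. cmod (A x y - B x y) \<le> e)"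

lemma perturb:
  fixes \<delta> :: real
  assumes "length As = length Bs"
    and "\<forall>i<length As. bnd N 2 (As ! i) \<and> bnd N 2 (Bs ! i) \<and> cls N \<delta> (As ! i) (Bs ! i)"
    and "\<delta> \<ge> 0"
  shows "bnd N ((2 * 2 ^ N) ^ length As) (mp N As) \<and>
         cls N (real (length As) * (2 * 2 ^ N) ^ length As * \<delta>) (mp N As) (mp N Bs)"
  using assms(1,2)
proof (induction As arbitrary: Bs)
  case Nil
  then show ?case by (auto simp: bnd_def cls_def mp_Nil idm_def)
next
  case (Cons A As Bs0)
  obtain B Bs where Bs0: "Bs0 = B # Bs" using Cons.prems(1) by (cases Bs0) auto
  have len: "length As = length Bs" using Cons.prems(1) Bs0 by simp
  have hyp: "\<forall>i<length As. bnd N 2 (As ! i) \<and> bnd N 2 (Bs ! i) \<and> cls N \<delta> (As ! i) (Bs ! i)"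
    using Cons.prems(2) Bs0 by auto
  have hA: "bnd N 2 A" "bnd N 2 B" "cls N \<delta> A B" using Cons.prems(2)[rule_format, of 0] Bs0 by auto
  define k where "k = length As"
  define D :: real where "D = 2 ^ N"
  have D1: "D \<ge> 1" by (simp add: D_def)
  have cardD: "real (card (basis N)) = D" by (simp add: D_def card_basis)
  note IH = Cons.IH[OF len hyp]
  let ?P = "mp N As" and ?P' = "mp N Bs"
  have bP: "bnd N ((2 * D) ^ k) ?P" using IH by (simp add: k_def D_def)
  have cP: "cls N (k * (2 * D) ^ k * \<delta>) ?P ?P'" using IH by (simp add: k_def D_def)
  have b1: "bnd N ((2 * D) ^ Suc k) (mp N (A # As))"
    unfolding bnd_def
  proof (intro ballI)
    fix x y assume xy: "x \<in> basis N" "y \<in> basis N"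
    have "cmod (mp N (A # As) x y) = cmod (\<Sum>z\<in>basis N. A x z * ?P z y)"
      by (simp add: mp_Cons matmul_def)
    also have "\<dots> \<le> (\<Sum>z\<in>basis N. cmod (A x z * ?P z y))" by (rule norm_sum)
    also have "\<dots> \<le> (\<Sum>z\<in>basis N. 2 * (2 * D) ^ k)"
    proof (rule sum_mono)
      fix z assume z: "z \<in> basis N"
      have "cmod (A x z) \<le> 2" using hA(1) xy z by (auto simp: bnd_def)
      moreover have "cmod (?P z y) \<le> (2 * D) ^ k" using bP xy z by (auto simp: bnd_def)
      ultimately show "cmod (A x z * ?P z y) \<le> 2 * (2 * D) ^ k"
        by (simp add: norm_mult mult_mono')
    qed
    also have "\<dots> = D * (2 * (2 * D) ^ k)" using cardD by simp
    also have "\<dots> = (2 * D) ^ Suc k" by simp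
    finally show "cmod (mp N (A # As) x y) \<le> (2 * D) ^ Suc k" .
  qed
  have c1: "cls N (Suc k * (2 * D) ^ Suc k * \<delta>) (mp N (A # As)) (mp N (B # Bs))"
    unfolding cls_def
  proof (intro ballI)
    fix x y assume xy: "x \<in> basis N" "y \<in> basis N"
    have "mp N (A # As) x y - mp N (B # Bs) x y =
          (\<Sum>z\<in>basis N. (A x z - B x z) * ?P z y + B x z * (?P z y - ?P' z y))"
      by (simp add: mp_Cons matmul_def sum_subtractf[symmetric] algebra_simps)
    hence "cmod (mp N (A # As) x y - mp N (B # Bs) x y) \<le>
       (\<Sum>z\<in>basis N. cmod ((A x z - B x z) * ?P z y + B x z * (?P z y - ?P' z y)))"
      by (simp add: norm_sum)
    also have "\<dots> \<le> (\<Sum>z\<in>basis N. \<delta> * (2 * D) ^ k + 2 * (k * (2 * D) ^ k * \<delta>))"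
    proof (rule sum_mono)
      fix z assume z: "z \<in> basis N"
      have 1: "cmod (A x z - B x z) \<le> \<delta>" using hA(3) xy z by (auto simp: cls_def)
      have 2: "cmod (?P z y) \<le> (2 * D) ^ k" using bP xy z by (auto simp: bnd_def)
      have 3: "cmod (B x z) \<le> 2" using hA(2) xy z by (auto simp: bnd_def)
      have 4: "cmod (?P z y - ?P' z y) \<le> k * (2 * D) ^ k * \<delta>" using cP xy z by (auto simp: cls_def)
      have "cmod ((A x z - B x z) * ?P z y) \<le> \<delta> * (2 * D) ^ k"
        using 1 2 by (simp add: norm_mult mult_mono' assms(3))
      moreover have "cmod (B x z * (?P z y - ?P' z y)) \<le> 2 * (k * (2 * D) ^ k * \<delta>)"
        using 3 4 by (simp add: norm_mult mult_mono')
      ultimately show "cmod ((A x z - B x z) * ?P z y + B x z * (?P z y - ?P' z y))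
          \<le> \<delta> * (2 * D) ^ k + 2 * (k * (2 * D) ^ k * \<delta>)"
        by (meson norm_triangle_le add_mono)
    qed
    also have "\<dots> = D * (1 + 2 * k) * ((2 * D) ^ k * \<delta>)" using cardD by (simp add: algebra_simps)
    also have "\<dots> \<le> (2 * D * (1 + k)) * ((2 * D) ^ k * \<delta>)"
      by (rule mult_right_mono) (use D1 assms(3) in auto)
    also have "\<dots> = Suc k * (2 * D) ^ Suc k * \<delta>" by (simp add: algebra_simps)
    finally show "cmod (mp N (A # As) x y - mp N (B # Bs) x y) \<le> Suc k * (2 * D) ^ Suc k * \<delta>" .
  qed
  have "length (A # As) = Suc k" by (simp add: k_def)
  thus ?case using b1 c1 Bs0 unfolding D_def by simp
qed

fun stp :: "cgate \<Rightarrow> bits \<times> real \<Rightarrow> bits \<times> real" where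
  "stp (CNOT a b) (z, \<phi>) = (z(b := (z a \<noteq> z b)), \<phi>)"
| "stp (Diag i \<alpha> \<beta>) (z, \<phi>) = (z, \<phi> + (if z i then \<beta> else \<alpha>))"

definition runf :: "cgate list \<Rightarrow> bits \<times> real \<Rightarrow> bits \<times> real" where
  "runf gs s = foldr stp gs s"

lemma runf_Nil[simp]: "runf [] s = s" by (simp add: runf_def)
lemma runf_Cons[simp]: "runf (g # gs) s = stp g (runf gs s)" by (simp add: runf_def)
lemma runf_append: "runf (xs @ ys) s = runf xs (runf ys s)" by (simp add: runf_def)

lemma stp_basis: "cgate_ok n g \<Longrightarrow> fst s \<in> basis n \<Longrightarrow> fst (stp g s) \<in> basis n"
  by (cases g; cases s) (auto simp: basis_on_def)

lemma run_basis: "cnot_diag_circuit n gs \<Longrightarrow> fst s \<in> basis n \<Longrightarrow> fst (runf gs s) \<in> basis n"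
  unfolding cnot_diag_circuit_def by (induction gs) (auto intro: stp_basis)

lemma cgate_mat_stp:
  "cgate_mat g x z = (if x = fst (stp g (z, \<phi>)) then exp (\<i> * of_real (snd (stp g (z, \<phi>)) - \<phi>)) else 0)"
proof (cases g)
  case (CNOT a b)
  have "((\<forall>k. k \<noteq> b \<longrightarrow> x k = z k) \<and> x b = (z a \<noteq> z b)) \<longleftrightarrow> x = z(b := (z a \<noteq> z b))"
    by (auto simp: fun_eq_iff)
  then show ?thesis using CNOT by simp
next
  case (Diag i \<alpha> \<beta>)
  then show ?thesis by auto
qed

lemma sum_delta_mult:
  assumes "finite A" "z0 \<in> A"
  shows "(\<Sum>z\<in>A. f z * (if z = z0 then e else 0)) = f z0 * (e::complex)"
proof -
  have "(\<Sum>z\<in>A. f z * (if z = z0 then e else 0)) = (\<Sum>z\<in>A. if z = z0 then f z0 * e else 0)"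
    by (rule sum.cong) auto
  also have "\<dots> = f z0 * e" using assms by simp
  finally show ?thesis .
qed

lemma cop_run:
  assumes "cnot_diag_circuit n gs" "y \<in> basis n"
  shows "cop n gs x y = (if x = fst (runf gs (y, 0)) then exp (\<i> * of_real (snd (runf gs (y, 0)))) else 0)"
  using assms(1)
proof (induction gs arbitrary: x)
  case Nil
  then show ?case by (simp add: cop_def idm_def)
next
  case (Cons g gs)
  have ok: "cnot_diag_circuit n gs" using Cons.prems by (simp add: cnot_diag_circuit_def)
  define s where "s = runf gs (y, 0)"
  have sb: "fst s \<in> basis n" unfolding s_def using run_basis[OF ok] assms(2) by simp
  have IH': "\<And>z. cop n gs z y = (if z = fst s then exp (\<i> * of_real (snd s)) else 0)"
    using Cons.IH[OF ok] unfolding s_def by blast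
  have "cop n (g # gs) x y = (\<Sum>z\<in>basis n. cgate_mat g x z * cop n gs z y)"
    by (simp add: cop_def matmul_def)
  also have "\<dots> = (\<Sum>z\<in>basis n. cgate_mat g x z * (if z = fst s then exp (\<i> * of_real (snd s)) else 0))"
    by (simp only: IH')
  also have "\<dots> = cgate_mat g x (fst s) * exp (\<i> * of_real (snd s))"
    by (rule sum_delta_mult[OF finite_basis sb])
  also have "\<dots> = (if x = fst (stp g s) then exp (\<i> * of_real (snd (stp g s))) else 0)"
    using cgate_mat_stp[of g x "fst s" "snd s"]
    by (auto simp: exp_add[symmetric] algebra_simps)
  finally show ?case by (simp add: s_def)
qed

section \<open>The block circuit\<close>

definition xr :: "bits \<Rightarrow> nat list \<Rightarrow> bool" where
  "xr z cs = foldr (\<lambda>s acc. z s \<noteq> acc) cs False"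

lemma xr_Cons[simp]: "xr z (s # cs) = (z s \<noteq> xr z cs)" by (simp add: xr_def)
lemma xr_Nil[simp]: "xr z [] = False" by (simp add: xr_def)

lemma xr_upd: "t \<notin> set cs \<Longrightarrow> xr (z(t := v)) cs = xr z cs"
  by (induction cs) auto

lemma runL: "t \<notin> set cs \<Longrightarrow>
  runf (map (\<lambda>s. CNOT s t) cs) (z, \<phi>) = (z(t := (z t \<noteq> xr z cs)), \<phi>)"
proof (induction cs)
  case Nil
  then show ?case by simp
next
  case (Cons s cs)
  have st: "s \<noteq> t" using Cons.prems by auto
  have IH: "runf (map (\<lambda>s. CNOT s t) cs) (z, \<phi>) = (z(t := (z t \<noteq> xr z cs)), \<phi>)"
    using Cons.prems by (intro Cons.IH) simp
  have "runf (map (\<lambda>s. CNOT s t) (s # cs)) (z, \<phi>) = stp (CNOT s t) (z(t := (z t \<noteq> xr z cs)), \<phi>)"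
    using IH by simp
  also have "\<dots> = (z(t := (z s \<noteq> (z t \<noteq> xr z cs))), \<phi>)" using st by simp
  also have "(z s \<noteq> (z t \<noteq> xr z cs)) = (z t \<noteq> xr z (s # cs))"
    by (cases "z s"; cases "z t"; cases "xr z cs") auto
  finally show ?case .
qed

definition bls :: "nat \<Rightarrow> nat \<Rightarrow> nat list" where
  "bls n j = filter (bit j) [0..<n]"

definition blk :: "nat \<Rightarrow> nat \<Rightarrow> real \<Rightarrow> cgate list" where
  "blk n j c = (let ls = bls n j; t = hd ls; L = map (\<lambda>s. CNOT s t) (tl ls) in L @ [Diag t 0 c] @ L)"

lemma ex_bit: "(j::nat) \<noteq> 0 \<Longrightarrow> \<exists>k. bit j k"
proof (rule ccontr)
  assume "j \<noteq> 0" "\<nexists>k. bit j k"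
  hence "j = 0" by (intro bit_eqI) auto
  thus False using \<open>j \<noteq> 0\<close> by simp
qed

lemma bls_ne: "1 \<le> j \<Longrightarrow> j < 2 ^ n \<Longrightarrow> bls n j \<noteq> []"
proof -
  assume j: "1 \<le> j" "j < 2 ^ n"
  obtain k where k: "bit j k"
    using j(1) ex_bit[of j] by auto
  have "bit (take_bit n j) k" using j(2) k by (simp add: take_bit_nat_eq_self)
  hence "k < n" by (simp add: bit_take_bit_iff)
  thus ?thesis using k by (auto simp: bls_def filter_empty_conv)
qed

lemma bls_dist: "distinct (bls n j)" by (simp add: bls_def)
lemma bls_lt: "k \<in> set (bls n j) \<Longrightarrow> k < n" by (simp add: bls_def)

lemma blk_ok: "1 \<le> j \<Longrightarrow> j < 2 ^ n \<Longrightarrow> cnot_diag_circuit n (blk n j c)"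
proof -
  assume j: "1 \<le> j" "j < 2 ^ n"
  obtain t cs where tc: "bls n j = t # cs" using bls_ne[OF j] by (cases "bls n j") auto
  have "t \<notin> set cs" using bls_dist[of n j] tc by simp
  moreover have "t < n" "\<forall>s\<in>set cs. s < n" using bls_lt[of _ n j] tc by auto
  ultimately show ?thesis by (auto simp: cnot_diag_circuit_def blk_def tc Let_def)
qed

lemma blk_run: "1 \<le> j \<Longrightarrow> j < 2 ^ n \<Longrightarrow>
   runf (blk n j c) (y, \<phi>) = (y, \<phi> + (if xr y (bls n j) then c else 0))"
proof -
  assume j: "1 \<le> j" "j < 2 ^ n"
  obtain t cs where tc: "bls n j = t # cs" using bls_ne[OF j] by (cases "bls n j") auto
  have tn: "t \<notin> set cs" using bls_dist[of n j] tc by simp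
  define L where "L = map (\<lambda>s. CNOT s t) cs"
  have b: "blk n j c = L @ [Diag t 0 c] @ L" by (simp add: blk_def tc L_def Let_def)
  define y1 where "y1 = y(t := (y t \<noteq> xr y cs))"
  have r1: "runf L (y, \<phi>) = (y1, \<phi>)" unfolding L_def y1_def by (rule runL[OF tn])
  have r2: "runf [Diag t 0 c] (y1, \<phi>) = (y1, \<phi> + (if xr y (bls n j) then c else 0))"
    by (simp add: y1_def tc)
  have yy: "y1(t := (y1 t \<noteq> xr y1 cs)) = y"
  proof
    fix k show "(y1(t := (y1 t \<noteq> xr y1 cs))) k = y k"
      unfolding y1_def using xr_upd[OF tn, of y]
      by (cases "k = t"; cases "y t"; cases "xr y cs") auto
  qed
  have r3: "runf L (y1, \<phi> + (if xr y (bls n j) then c else 0)) = (y, \<phi> + (if xr y (bls n j) then c else 0))"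
    unfolding L_def using runL[OF tn] yy by simp
  show ?thesis by (simp only: b runf_append r1 r2 r3)
qed

definition circ :: "nat \<Rightarrow> (nat \<Rightarrow> real) \<Rightarrow> cgate list" where
  "circ n c = concat (map (\<lambda>j. blk n j (c j)) [1..<2 ^ n])"

lemma circ_run_gen: "\<forall>j\<in>set js. 1 \<le> j \<and> j < 2 ^ n \<Longrightarrow>
  runf (concat (map (\<lambda>j. blk n j (c j)) js)) (y, \<phi>) =
    (y, \<phi> + sum_list (map (\<lambda>j. if xr y (bls n j) then c j else 0) js))"
  by (induction js arbitrary: \<phi>) (auto simp: runf_append blk_run)

lemma circ_ok: "cnot_diag_circuit n (circ n c)"
  unfolding circ_def cnot_diag_circuit_def using blk_ok[of _ n]
  by (auto simp: cnot_diag_circuit_def)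

definition phs :: "nat \<Rightarrow> (nat \<Rightarrow> real) \<Rightarrow> bits \<Rightarrow> real" where
  "phs n c y = (\<Sum>j\<in>{1..<2 ^ n}. if xr y (bls n j) then c j else 0)"

lemma circ_diag: "y \<in> basis n \<Longrightarrow> cop n (circ n c) y y = exp (\<i> * of_real (phs n c y))"
proof -
  assume y: "y \<in> basis n"
  have "runf (circ n c) (y, 0) = (y, phs n c y)"
    unfolding circ_def phs_def
    by (subst circ_run_gen) (auto simp: sum_set_upt_conv_sum_list_nat[symmetric])
  thus ?thesis using cop_run[OF circ_ok y] by simp
qed

lemma prod_xr: "prod_list (map (\<lambda>k. if P k \<and> y k then -1 else 1) xs) = (if xr y (filter P xs) then -1 else (1::real))"
  by (induction xs) auto

lemma chi_xr: "chi n (bit j) y = (if xr y (bls n j) then -1 else 1)"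
  unfolding chi_def bls_def by (rule prod_xr)

lemma bit_lt: "(j::nat) < 2 ^ n \<Longrightarrow> bit j k \<Longrightarrow> k < n"
proof -
  assume "j < 2 ^ n" "bit j k"
  hence "bit (take_bit n j) k" by (simp add: take_bit_nat_eq_self)
  thus "k < n" by (simp add: bit_take_bit_iff)
qed

lemma phs_chi: "phs n c y = (\<Sum>i\<in>{1..<2 ^ n}. c i * (1 - chi n (bit i) y) / 2)"
  unfolding phs_def by (rule sum.cong) (auto simp: chi_xr)

lemma sum_chi_I: "(j::nat) \<in> {1..<2 ^ n} \<Longrightarrow> (\<Sum>y\<in>basis n. chi n (bit j) y) = 0"
proof -
  assume j: "j \<in> {1..<2 ^ n}"
  obtain k where "bit j k" using j ex_bit[of j] by auto
  moreover have "k < n" using bit_lt[of j n k] j calculation by auto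
  ultimately show ?thesis by (auto simp: sum_chi)
qed

lemma sum_chi2: "(i::nat) < 2 ^ n \<Longrightarrow> j < 2 ^ n \<Longrightarrow>
   (\<Sum>y\<in>basis n. chi n (bit j) y * chi n (bit i) y) = (if i = j then 2 ^ n else 0)"
proof -
  assume ij: "i < 2 ^ n" "j < 2 ^ n"
  have "(\<forall>k<n. \<not> (bit j k \<noteq> bit i k)) \<longleftrightarrow> i = j"
  proof
    assume h: "\<forall>k<n. \<not> (bit j k \<noteq> bit i k)"
    show "i = j"
    proof (rule bit_eqI)
      fix k show "bit i k = bit j k"
        using h bit_lt[OF ij(1), of k] bit_lt[OF ij(2), of k] by (cases "k < n") auto
    qed
  qed auto
  thus ?thesis by (simp add: chi_mult sum_chi)
qed

lemma recover: "(j::nat) \<in> {1..<2 ^ n} \<Longrightarrow>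
  (\<Sum>y\<in>basis n. chi n (bit j) y * phs n c y) = - (2 ^ n / 2) * c j"
proof -
  assume j: "j \<in> {1..<2 ^ n}"
  have "(\<Sum>y\<in>basis n. chi n (bit j) y * phs n c y) =
     (\<Sum>y\<in>basis n. \<Sum>i\<in>{1..<2 ^ n}. c i / 2 * (chi n (bit j) y - chi n (bit j) y * chi n (bit i) y))"
    unfolding phs_chi sum_distrib_left by (intro sum.cong refl) (simp add: algebra_simps diff_divide_distrib)
  also have "\<dots> = (\<Sum>i\<in>{1..<2 ^ n}. c i / 2 * ((\<Sum>y\<in>basis n. chi n (bit j) y) -
        (\<Sum>y\<in>basis n. chi n (bit j) y * chi n (bit i) y)))"
    by (subst sum.swap) (intro sum.cong refl; simp add: sum_distrib_left sum_subtractf[symmetric] sum_divide_distrib[symmetric])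
  also have "\<dots> = (\<Sum>i\<in>{1..<2 ^ n}. if i = j then - (2 ^ n / 2) * c j else 0)"
    by (rule sum.cong) (use j in \<open>auto simp: sum_chi_I sum_chi2\<close>)
  also have "\<dots> = - (2 ^ n / 2) * c j" using j by simp
  finally show ?thesis .
qed

lemma recover_diff:
  assumes "\<forall>y\<in>basis n. \<bar>phs n c y - phs n c' y\<bar> \<le> \<delta>" "(j::nat) \<in> {1..<2 ^ n}"
  shows "\<bar>c j - c' j\<bar> \<le> 2 * \<delta>"
proof -
  have e: "(\<Sum>y\<in>basis n. chi n (bit j) y * (phs n c y - phs n c' y)) = - (2 ^ n / 2) * (c j - c' j)"
    unfolding right_diff_distrib sum_subtractf recover[OF assms(2)] by (simp add: algebra_simps)
  have "(2 ^ n / 2) * \<bar>c j - c' j\<bar> = \<bar>(\<Sum>y\<in>basis n. chi n (bit j) y * (phs n c y - phs n c' y))\<bar>"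
    unfolding e by (simp add: abs_mult)
  also have "\<dots> \<le> (\<Sum>y\<in>basis n. \<bar>chi n (bit j) y * (phs n c y - phs n c' y)\<bar>)" by (rule sum_abs)
  also have "\<dots> \<le> (\<Sum>y\<in>basis n. \<delta>)"
    by (rule sum_mono) (use assms(1) in \<open>auto simp: abs_mult abs_chi\<close>)
  also have "\<dots> = 2 ^ n * \<delta>" by (simp add: card_basis)
  finally have "(2 ^ n / 2) * \<bar>c j - c' j\<bar> \<le> (2 ^ n / 2) * (2 * \<delta>)" by simp
  thus ?thesis by (simp add: mult_le_cancel_left_pos)
qed

lemma sin_sep: 
  fixes u v :: real
  assumes "0 \<le> v" "v < u" "u \<le> 1/2"
  shows "(u - v) / 2 \<le> sin u - sin v"
proof -
  obtain z where z: "v < z" "z < u" "sin u - sin v = (u - v) * cos z"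
    using MVT2[OF assms(2), of sin cos] by (auto intro: DERIV_sin)
  have "cos (pi / 3) \<le> cos z"
    by (rule cos_monotone_0_pi_le) (use z assms pi_ge_two in auto)
  hence "1/2 \<le> cos z" by (simp add: cos_60)
  hence "(u - v) * (1/2) \<le> (u - v) * cos z" using assms by (intro mult_left_mono) auto
  thus ?thesis using z by simp
qed

lemma exp_sep:
  fixes u v :: real
  assumes "0 \<le> u" "u \<le> 1/2" "0 \<le> v" "v \<le> 1/2"
  shows "\<bar>u - v\<bar> \<le> 2 * cmod (exp (\<i> * of_real u) - exp (\<i> * of_real v))"
proof -
  have im: "Im (exp (\<i> * of_real u) - exp (\<i> * of_real v)) = sin u - sin v"
    by (simp add: Im_exp)
  have s1: "\<bar>sin u - sin v\<bar> \<le> cmod (exp (\<i> * of_real u) - exp (\<i> * of_real v))"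
    using abs_Im_le_cmod[of "exp (\<i> * of_real u) - exp (\<i> * of_real v)"] im by simp
  have s2: "\<bar>u - v\<bar> \<le> 2 * \<bar>sin u - sin v\<bar>"
  proof (cases "v < u")
    case True
    thus ?thesis using sin_sep[of v u] assms by auto
  next
    case False
    show ?thesis
    proof (cases "u < v")
      case True
      thus ?thesis using sin_sep[of u v] assms by auto
    next
      case False
      thus ?thesis using \<open>\<not> v < u\<close> by auto
    qed
  qed
  have s3: "2 * \<bar>sin u - sin v\<bar> \<le> 2 * cmod (exp (\<i> * of_real u) - exp (\<i> * of_real v))"
    using s1 by simp
  show ?thesis by (rule order_trans[OF s2 s3])
qed

section \<open>Gates: bounds and rounding\<close>

lemma unit_entry:
  assumes "unitary_on B U" "x \<in> B" "y \<in> B" "finite B"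
  shows "cmod (U x y) \<le> 1"
proof -
  have cw: "cnj w * w = of_real ((cmod w)\<^sup>2)" for w
    by (metis complex_mult_cnj cmod_power2 mult.commute)
  have h1: "(\<Sum>z\<in>B. cnj (U z y) * U z y) = 1" using assms(1,3) by (auto simp: unitary_on_def)
  have h2: "(\<Sum>z\<in>B. cnj (U z y) * U z y) = of_real (\<Sum>z\<in>B. (cmod (U z y))\<^sup>2)"
    by (simp only: cw of_real_sum)
  have "complex_of_real (\<Sum>z\<in>B. (cmod (U z y))\<^sup>2) = 1" using h1 by (simp only: h2)
  hence s: "(\<Sum>z\<in>B. (cmod (U z y))\<^sup>2) = 1" using of_real_eq_1_iff by blast
  have "(cmod (U x y))\<^sup>2 \<le> (\<Sum>z\<in>B. (cmod (U z y))\<^sup>2)"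
    using assms(2,4) by (intro member_le_sum) auto
  hence "(cmod (U x y))\<^sup>2 \<le> 1\<^sup>2" using s by simp
  thus ?thesis by (rule power2_le_imp_le) simp
qed

lemma restr_in: "restr S x \<in> basis_on S"
  by (simp add: restr_def basis_on_def)

lemma valid_finite: "valid_gate N (S, U) \<Longrightarrow> finite S"
  unfolding valid_gate_def by (auto dest: finite_subset[OF _ finite_lessThan])

lemma gate_mat_eq: "gate_mat (S, U) x y = (if (\<forall>k. k \<notin> S \<longrightarrow> x k = y k) then U (restr S x) (restr S y) else 0)"
  by (simp add: gate_mat_def)

lemma gate_bnd:
  assumes "valid_gate N g"
  shows "cmod (gate_mat g x y) \<le> 1"
proof -
  obtain S U where g: "g = (S, U)" by (cases g)
  have u: "unitary_on (basis_on S) U" using assms by (simp add: valid_gate_def g)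
  have f: "finite S" using assms g valid_finite by blast
  have "cmod (U (restr S x) (restr S y)) \<le> 1"
    by (rule unit_entry[OF u restr_in restr_in finite_basis_on[OF f]])
  thus ?thesis by (simp add: g gate_mat_eq)
qed

definition rnd :: "nat \<Rightarrow> complex \<Rightarrow> complex" where
  "rnd R z = Complex (of_int (round (R * Re z)) / R) (of_int (round (R * Im z)) / R)"

lemma rnd_err:
  assumes "R > 0"
  shows "cmod (rnd R z - z) \<le> 1 / R"
proof -
  have a: "\<bar>of_int (round (R * t)) / R - t\<bar> \<le> 1 / (2 * R)" for t :: real
  proof -
    have "\<bar>of_int (round (R * t)) - R * t\<bar> \<le> 1/2" by (rule of_int_round_abs_le)
    hence "\<bar>of_int (round (R * t)) - R * t\<bar> / R \<le> (1/2) / R"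
      using assms by (intro divide_right_mono) auto
    hence "\<bar>(of_int (round (R * t)) - R * t) / R\<bar> \<le> (1/2) / R" by simp
    moreover have "(of_int (round (R * t)) - R * t) / R = of_int (round (R * t)) / R - t"
      using assms by (simp add: field_simps)
    ultimately show ?thesis by simp
  qed
  have "cmod (rnd R z - z) \<le> \<bar>Re (rnd R z - z)\<bar> + \<bar>Im (rnd R z - z)\<bar>" by (rule cmod_le)
  also have "\<dots> \<le> 1 / (2 * R) + 1 / (2 * R)"
    using a[of "Re z"] a[of "Im z"] by (auto simp: rnd_def intro!: add_mono)
  finally show ?thesis by simp
qed

definition Grid :: "nat \<Rightarrow> complex set" where
  "Grid R = (\<lambda>(a, b). Complex (of_int a / R) (of_int b / R)) ` ({- int R..int R} \<times> {- int R..int R})"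

lemma round_bound:
  assumes "\<bar>t\<bar> \<le> 1"
  shows "round (real R * t) \<in> {- int R..int R}"
proof -
  have "\<bar>real R * t\<bar> \<le> real R" using assms by (simp add: abs_mult mult_left_le)
  hence h1: "real R * t \<le> of_int (int R)" and h2: "of_int (- int R) \<le> real R * t" by auto
  have "round (real R * t) \<le> round (of_int (int R) :: real)" using h1 by (rule round_mono)
  moreover have "round (of_int (- int R) :: real) \<le> round (real R * t)" using h2 by (rule round_mono)
  ultimately show ?thesis unfolding round_of_int atLeastAtMost_iff by auto
qed

lemma rnd_grid: "cmod z \<le> 1 \<Longrightarrow> rnd R z \<in> Grid R"
  unfolding rnd_def Grid_def
  using round_bound[of "Re z" R] round_bound[of "Im z" R] abs_Re_le_cmod[of z] abs_Im_le_cmod[of z]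
  by (intro image_eqI[where x = "(round (R * Re z), round (R * Im z))"]) auto

lemma finite_Grid: "finite (Grid R)" by (simp add: Grid_def)

lemma zero_Grid: "0 \<in> Grid R"
  unfolding Grid_def by (intro image_eqI[where x = "(0, 0)"]) (auto simp: complex_eq_iff)

lemma card_Grid: "card (Grid R) \<le> (2 * R + 1) ^ 2"
proof -
  have "card (Grid R) \<le> card ({- int R..int R} \<times> {- int R..int R})"
    unfolding Grid_def by (rule card_image_le) simp
  also have "\<dots> = (2 * R + 1) ^ 2"
  proof -
    have c: "card {- int R..int R} = 2 * R + 1" by (simp add: card_atLeastAtMost_int)
    show ?thesis by (simp only: card_cartesian_product c power2_eq_square)
  qed
  finally show ?thesis .
qed

definition rgate :: "nat \<Rightarrow> nat set \<times> qop \<Rightarrow> nat set \<times> qop" where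
  "rgate R g = (fst g, \<lambda>x y. if x \<in> basis_on (fst g) \<and> y \<in> basis_on (fst g) then rnd R (snd g x y) else 0)"

lemma rgate_mat: "gate_mat (rgate R (S, U)) x y =
   (if (\<forall>k. k \<notin> S \<longrightarrow> x k = y k) then rnd R (U (restr S x) (restr S y)) else 0)"
  by (auto simp: rgate_def gate_mat_eq restr_in)

lemma rgate_close:
  assumes "valid_gate N g" "R > 0"
  shows "cmod (gate_mat (rgate R g) x y - gate_mat g x y) \<le> 1 / R"
proof -
  obtain S U where g: "g = (S, U)" by (cases g)
  show ?thesis using rnd_err[OF assms(2)] assms(2) by (auto simp: g rgate_mat gate_mat_eq)
qed

lemma rgate_bnd:
  assumes "valid_gate N g" "R > 0"
  shows "cmod (gate_mat (rgate R g) x y) \<le> 2"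
proof -
  have "cmod (gate_mat (rgate R g) x y) \<le> cmod (gate_mat (rgate R g) x y - gate_mat g x y) + cmod (gate_mat g x y)"
    by (metis diff_add_cancel norm_triangle_ineq)
  also have "\<dots> \<le> 1 / R + 1" using rgate_close[OF assms] gate_bnd[OF assms(1)] by (rule add_mono)
  also have "\<dots> \<le> 2" using assms(2) by simp
  finally show ?thesis .
qed

definition UG :: "nat \<Rightarrow> nat set \<Rightarrow> qop set" where
  "UG R S = {V. (\<forall>x y. \<not> (x \<in> basis_on S \<and> y \<in> basis_on S) \<longrightarrow> V x y = 0) \<and>
                (\<forall>x\<in>basis_on S. \<forall>y\<in>basis_on S. V x y \<in> Grid R)}"

lemma UG_fin_card:
  assumes "finite S" "card S \<le> 2"
  shows "finite (UG R S) \<and> card (UG R S) \<le> (2 * R + 1) ^ 32"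
proof -
  define B where "B = basis_on S"
  have fB: "finite B" using assms(1) by (simp add: B_def finite_basis_on)
  have cB: "card B \<le> 4"
  proof -
    have "2 ^ card S \<le> (2::nat) ^ 2" by (rule power_increasing) (use assms(2) in auto)
    thus ?thesis using card_basis_on_le[OF assms(1)] unfolding B_def by simp
  qed
  define \<phi> where "\<phi> V = restrict (\<lambda>p. V (fst p) (snd p)) (B \<times> B)" for V :: qop
  have inj: "inj_on \<phi> (UG R S)"
  proof (rule inj_onI)
    fix V W assume V: "V \<in> UG R S" and W: "W \<in> UG R S" and e: "\<phi> V = \<phi> W"
    show "V = W"
    proof (intro ext)
      fix x y
      show "V x y = W x y"
      proof (cases "x \<in> B \<and> y \<in> B")
        case True
        thus ?thesis using fun_cong[OF e, of "(x, y)"] by (simp add: \<phi>_def)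
      next
        case False
        thus ?thesis using V W by (simp add: UG_def B_def)
      qed
    qed
  qed
  have sub: "\<phi> ` UG R S \<subseteq> (B \<times> B) \<rightarrow>\<^sub>E Grid R"
  proof
    fix W assume "W \<in> \<phi> ` UG R S"
    then obtain V where V: "V \<in> UG R S" and W: "W = \<phi> V" by blast
    show "W \<in> (B \<times> B) \<rightarrow>\<^sub>E Grid R"
      unfolding W \<phi>_def by (rule restrict_PiE_iff[THEN iffD2]) (use V in \<open>auto simp: UG_def B_def\<close>)
  qed
  have finPi: "finite ((B \<times> B) \<rightarrow>\<^sub>E Grid R)" using fB finite_Grid by (simp add: finite_PiE)
  have fin: "finite (UG R S)"
    using finite_imageD[OF finite_subset[OF sub finPi] inj] .
  have "card (UG R S) = card (\<phi> ` UG R S)" using card_image[OF inj] by simp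
  also have "\<dots> \<le> card ((B \<times> B) \<rightarrow>\<^sub>E Grid R)" by (rule card_mono[OF finPi sub])
  also have "\<dots> = card (Grid R) ^ (card B * card B)" using fB by (simp add: card_funcsetE card_cartesian_product)
  also have "\<dots> \<le> card (Grid R) ^ 16"
  proof (rule power_increasing)
    show "card B * card B \<le> 16" using cB mult_le_mono[OF cB cB] by simp
    show "1 \<le> card (Grid R)" using zero_Grid finite_Grid by (metis One_nat_def Suc_leI card_gt_0_iff empty_iff)
  qed
  also have "\<dots> \<le> ((2 * R + 1) ^ 2) ^ 16" by (rule power_mono[OF card_Grid]) simp
  also have "\<dots> = (2 * R + 1) ^ 32" by (simp flip: power_mult)
  finally show ?thesis using fin by simp
qed

definition RG :: "nat \<Rightarrow> nat \<Rightarrow> (nat set \<times> qop) set" where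
  "RG R N = Sigma {S. S \<subseteq> {..<N} \<and> card S \<le> 2} (UG R)"

lemma RG_fin_card: "finite (RG R N) \<and> card (RG R N) \<le> 2 ^ N * (2 * R + 1) ^ 32"
proof -
  define A where "A = {S. S \<subseteq> {..<N} \<and> card S \<le> 2}"
  have fA: "finite A" unfolding A_def by (rule finite_subset[of _ "Pow {..<N}"]) auto
  have cA: "card A \<le> 2 ^ N"
  proof -
    have "card A \<le> card (Pow {..<N})" by (rule card_mono) (auto simp: A_def)
    thus ?thesis by (simp add: card_Pow)
  qed
  have fU: "\<forall>S\<in>A. finite (UG R S) \<and> card (UG R S) \<le> (2 * R + 1) ^ 32"
  proof
    fix S assume "S \<in> A"
    hence "S \<subseteq> {..<N}" "card S \<le> 2" by (auto simp: A_def)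
    moreover have "finite S" using calculation(1) finite_subset by blast
    ultimately show "finite (UG R S) \<and> card (UG R S) \<le> (2 * R + 1) ^ 32" using UG_fin_card by blast
  qed
  have fin: "finite (RG R N)" unfolding RG_def A_def[symmetric] using fA fU by auto
  have "card (RG R N) = (\<Sum>S\<in>A. card (UG R S))"
    unfolding RG_def A_def[symmetric] using fA fU by (simp add: card_SigmaI)
  also have "\<dots> \<le> (\<Sum>S\<in>A. (2 * R + 1) ^ 32)" using fU by (intro sum_mono) auto
  also have "\<dots> = card A * (2 * R + 1) ^ 32" by simp
  also have "\<dots> \<le> 2 ^ N * (2 * R + 1) ^ 32" using cA by simp
  finally show ?thesis using fin by simp
qed

lemma rgate_in:
  assumes "valid_gate N g"
  shows "rgate R g \<in> RG R N"
proof -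
  obtain S U where g: "g = (S, U)" by (cases g)
  have v: "S \<subseteq> {..<N}" "card S \<le> 2" "unitary_on (basis_on S) U" using assms by (auto simp: valid_gate_def g)
  have f: "finite S" using assms g valid_finite by blast
  have "(\<lambda>x y. if x \<in> basis_on S \<and> y \<in> basis_on S then rnd R (U x y) else 0) \<in> UG R S"
    unfolding UG_def
    using unit_entry[OF v(3) _ _ finite_basis_on[OF f]] rnd_grid by auto
  moreover have "rgate R g = (S, \<lambda>x y. if x \<in> basis_on S \<and> y \<in> basis_on S then rnd R (U x y) else 0)"
    unfolding rgate_def g fst_conv snd_conv by (rule refl)
  ultimately show ?thesis using v by (simp add: RG_def)
qed

definition RC :: "nat \<Rightarrow> nat \<Rightarrow> nat \<Rightarrow> (nat set \<times> qop) list set" where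
  "RC R N L = {rs. set rs \<subseteq> RG R N \<and> length rs \<le> L}"

lemma card_lists_le:
  assumes "finite A" "card A \<le> c" "1 \<le> c"
  shows "card {xs. set xs \<subseteq> A \<and> length xs \<le> L} \<le> (L + 1) * c ^ L"
proof -
  have eq: "{xs. set xs \<subseteq> A \<and> length xs \<le> L} = (\<Union>l\<in>{..L}. {xs. set xs \<subseteq> A \<and> length xs = l})" by auto
  have "card {xs. set xs \<subseteq> A \<and> length xs \<le> L} \<le> (\<Sum>l\<in>{..L}. card {xs. set xs \<subseteq> A \<and> length xs = l})"
    unfolding eq by (rule card_UN_le) simp
  also have "\<dots> = (\<Sum>l\<in>{..L}. card A ^ l)" using assms(1) by (simp add: card_lists_length_eq)
  also have "\<dots> \<le> (\<Sum>l\<in>{..L}. c ^ L)"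
  proof (rule sum_mono)
    fix l assume "l \<in> {..L}"
    hence "card A ^ l \<le> c ^ l" "c ^ l \<le> c ^ L" using assms by (auto intro: power_mono power_increasing)
    thus "card A ^ l \<le> c ^ L" by simp
  qed
  also have "\<dots> = (L + 1) * c ^ L" by simp
  finally show ?thesis .
qed

lemma RC_fin_card: "finite (RC R N L) \<and> card (RC R N L) \<le> (L + 1) * (2 ^ N * (2 * R + 1) ^ 32) ^ L"
proof -
  have f: "finite (RG R N)" and c: "card (RG R N) \<le> 2 ^ N * (2 * R + 1) ^ 32" using RG_fin_card by auto
  have "1 \<le> (2::nat) ^ N * (2 * R + 1) ^ 32" by simp
  from card_lists_le[OF f c this, of L] finite_lists_length_le[OF f, of L]
  show ?thesis unfolding RC_def by blast
qed

lemma embed_diag: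
  assumes "embeds n m F M" "y \<in> basis n"
  shows "M y y = F y y"
proof -
  define \<psi> :: qvec where "\<psi> z = (if z = y then 1 else 0)" for z
  have yN: "y \<in> basis (n + m)" using basis_mono[OF _ assms(2), of "n + m"] by simp
  have "apply_op (n + m) M (zext n \<psi>) y = zext n (apply_op n F \<psi>) y"
    using assms(1) yN by (simp add: embeds_def)
  moreover have "apply_op (n + m) M (zext n \<psi>) y = (\<Sum>z\<in>basis (n + m). M y z * (if z = y then 1 else 0))"
    unfolding apply_op_def zext_def \<psi>_def using assms(2) by (intro sum.cong) auto
  moreover have "\<dots> = M y y" by (rule sum_delta_mult[OF finite_basis yN, of "M y" 1, simplified])
  moreover have "zext n (apply_op n F \<psi>) y = (\<Sum>z\<in>basis n. F y z * (if z = y then 1 else 0))"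
    unfolding apply_op_def zext_def \<psi>_def using assms(2) by simp
  moreover have "\<dots> = F y y" by (rule sum_delta_mult[OF finite_basis assms(2), of "F y" 1, simplified])
  ultimately show ?thesis by simp
qed

lemma layer_len:
  assumes "layer_ok N gs"
  shows "length gs \<le> N"
proof -
  let ?f = "\<lambda>i. Min (fst (gs ! i))"
  have ne: "fst (gs ! i) \<noteq> {} \<and> fst (gs ! i) \<subseteq> {..<N} \<and> finite (fst (gs ! i))" if "i < length gs" for i
  proof -
    have "gs ! i \<in> set gs" using that by simp
    hence v: "valid_gate N (gs ! i)" using assms by (simp add: layer_ok_def)
    obtain S U where g: "gs ! i = (S, U)" by (cases "gs ! i")
    have "S \<noteq> {}" "S \<subseteq> {..<N}" using v unfolding g valid_gate_def by simp_all
    moreover have "finite S" using v unfolding g by (rule valid_finite)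
    ultimately show ?thesis by (simp add: g)
  qed
  have inj: "inj_on ?f {..<length gs}"
  proof (rule inj_onI)
    fix i j assume i: "i \<in> {..<length gs}" and j: "j \<in> {..<length gs}" and e: "?f i = ?f j"
    show "i = j"
    proof (rule ccontr)
      assume "i \<noteq> j"
      moreover have "i < length gs" "j < length gs" using i j by auto
      ultimately have "fst (gs ! i) \<inter> fst (gs ! j) = {}" using assms unfolding layer_ok_def by blast
      moreover have "?f i \<in> fst (gs ! i)" using ne[OF \<open>i < length gs\<close>] by (intro Min_in) auto
      moreover have "?f j \<in> fst (gs ! j)" using ne[OF \<open>j < length gs\<close>] by (intro Min_in) auto
      ultimately show False using e by (metis disjoint_iff)
    qed
  qed
  have "?f ` {..<length gs} \<subseteq> {..<N}"
  proof
    fix k assume "k \<in> ?f ` {..<length gs}"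
    then obtain i where i: "i < length gs" and k: "k = ?f i" by auto
    have "?f i \<in> fst (gs ! i)" using ne[OF i] by (intro Min_in) auto
    thus "k \<in> {..<N}" using ne[OF i] k by blast
  qed
  from card_inj_on_le[OF inj this] show ?thesis by simp
qed

lemma concat_len: "\<forall>L\<in>set Ls. length L \<le> N \<Longrightarrow> length (concat Ls) \<le> length Ls * N"
  by (induction Ls) auto

definition Kc :: "nat \<Rightarrow> nat \<Rightarrow> real" where
  "Kc N L = real L * (2 * 2 ^ N) ^ L"

lemma Kc_mono: "G \<le> L \<Longrightarrow> real G * (2 * 2 ^ N) ^ G \<le> Kc N L"
proof -
  assume GL: "G \<le> L"
  have one: "1 \<le> (2::real) * 2 ^ N" using one_le_power[of "2::real" N] by linarith
  have "(2 * 2 ^ N) ^ G \<le> ((2::real) * 2 ^ N) ^ L" by (rule power_increasing[OF GL one])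
  moreover have "real G \<le> real L" using GL by simp
  ultimately show ?thesis unfolding Kc_def by (intro mult_mono) auto
qed

lemma circuit_approx:
  assumes "circuit_of_depth N d M" "R > 0"
  shows "\<exists>rs \<in> RC R N (d * N). \<forall>x\<in>basis N. \<forall>y\<in>basis N.
            cmod (mp N (map gate_mat rs) x y - M x y) \<le> Kc N (d * N) / R"
proof -
  obtain Ls where Ls: "length Ls = d" "\<forall>L\<in>set Ls. layer_ok N L"
    "\<forall>x\<in>basis N. \<forall>y\<in>basis N. M x y = foldr (\<lambda>L A. matmul N (layer_op N L) A) Ls idm x y"
    using assms(1) by (auto simp: circuit_of_depth_def)
  define gl where "gl = concat Ls"
  have valid: "\<forall>g\<in>set gl. valid_gate N g" using Ls(2) by (auto simp: gl_def layer_ok_def)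
  have lgl: "length gl \<le> d * N"
    using concat_len[of Ls N] layer_len Ls(1,2) by (auto simp: gl_def)
  define rs where "rs = map (rgate R) gl"
  have rsin: "rs \<in> RC R N (d * N)" using valid lgl rgate_in by (auto simp: RC_def rs_def)
  have "\<forall>i<length (map gate_mat rs). bnd N 2 (map gate_mat rs ! i) \<and> bnd N 2 (map gate_mat gl ! i) \<and>
          cls N (1 / R) (map gate_mat rs ! i) (map gate_mat gl ! i)"
  proof (intro allI impI)
    fix i assume "i < length (map gate_mat rs)"
    hence i: "i < length gl" by (simp add: rs_def)
    hence v: "valid_gate N (gl ! i)" using valid by simp
    have b1: "cmod (gate_mat (gl ! i) x y) \<le> 2" for x y using gate_bnd[OF v, of x y] by simp
    show "bnd N 2 (map gate_mat rs ! i) \<and> bnd N 2 (map gate_mat gl ! i) \<and>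
          cls N (1 / R) (map gate_mat rs ! i) (map gate_mat gl ! i)"
      using i rgate_bnd[OF v assms(2)] b1 rgate_close[OF v assms(2)]
      by (simp add: rs_def bnd_def cls_def)
  qed
  from perturb[OF _ this] have c: "cls N (real (length rs) * (2 * 2 ^ N) ^ length rs * (1 / R))
      (mp N (map gate_mat rs)) (mp N (map gate_mat gl))"
    by (simp add: rs_def)
  have le: "real (length rs) * (2 * 2 ^ N) ^ length rs * (1 / R) \<le> Kc N (d * N) / R"
    using Kc_mono[of "length rs" "d * N" N] lgl assms(2) by (simp add: rs_def divide_right_mono)
  have eq: "\<forall>x\<in>basis N. \<forall>y\<in>basis N. M x y = mp N (map gate_mat gl) x y"
    using Ls(3) circuit_flat[of N Ls] by (simp add: eqon_def gl_def)
  show ?thesis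
    using rsin c le eq by (intro bexI[of _ rs]) (auto simp: cls_def intro: order_trans)
qed

definition Tset :: "nat \<Rightarrow> nat \<Rightarrow> (nat \<Rightarrow> nat) set" where
  "Tset n R = PiE {1..<2 ^ n} (\<lambda>_. {1..R})"

definition coef :: "nat \<Rightarrow> nat \<Rightarrow> (nat \<Rightarrow> nat) \<Rightarrow> nat \<Rightarrow> real" where
  "coef n R a j = real (a j) / (real R * 2 ^ (n + 1))"

lemma coef_range:
  assumes "a \<in> Tset n R" "R > 0" "j \<in> {1..<2 ^ n}"
  shows "0 \<le> coef n R a j \<and> coef n R a j \<le> 1 / 2 ^ (n + 1)"
proof -
  have "a j \<le> R" using assms(1,3) by (auto simp: Tset_def PiE_iff)
  hence "real (a j) / (real R * 2 ^ (n + 1)) \<le> real R / (real R * 2 ^ (n + 1))"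
    by (intro divide_right_mono) auto
  also have "\<dots> = 1 / 2 ^ (n + 1)" using assms(2) by simp
  finally show ?thesis by (simp add: coef_def)
qed

lemma ph_range:
  assumes "a \<in> Tset n R" "R > 0"
  shows "0 \<le> phs n (coef n R a) y \<and> phs n (coef n R a) y \<le> 1 / 2"
proof -
  have "phs n (coef n R a) y \<le> (\<Sum>j\<in>{1..<(2::nat) ^ n}. 1 / (2::real) ^ (n + 1))"
    unfolding phs_def using coef_range[OF assms] by (intro sum_mono) auto
  also have "\<dots> = real (2 ^ n - 1) / 2 ^ (n + 1)" by simp
  also have "\<dots> \<le> 2 ^ n / 2 ^ (n + 1)" by (intro divide_right_mono) auto
  also have "\<dots> = 1 / 2" by simp
  finally have "phs n (coef n R a) y \<le> 1 / 2" .
  moreover have "0 \<le> phs n (coef n R a) y"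
    unfolding phs_def using coef_range[OF assms] by (intro sum_nonneg) auto
  ultimately show ?thesis by simp
qed

lemma close_pair:
  assumes a: "a \<in> Tset n R" and a': "a' \<in> Tset n R" and R: "R > 0"
    and ca: "\<forall>y\<in>basis n. cmod (P y y - exp (\<i> * of_real (phs n (coef n R a) y))) \<le> \<epsilon>"
    and ca': "\<forall>y\<in>basis n. cmod (P y y - exp (\<i> * of_real (phs n (coef n R a') y))) \<le> \<epsilon>"
    and j: "j \<in> {1..<2 ^ n}"
  shows "\<bar>real (a j) - real (a' j)\<bar> \<le> 8 * \<epsilon> * R * 2 ^ (n + 1)"
proof -
  have "\<forall>y\<in>basis n. \<bar>phs n (coef n R a) y - phs n (coef n R a') y\<bar> \<le> 4 * \<epsilon>"
  proof
    fix y assume y: "y \<in> basis n"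
    let ?u = "phs n (coef n R a) y" and ?v = "phs n (coef n R a') y"
    have "cmod (exp (\<i> * of_real ?u) - exp (\<i> * of_real ?v)) \<le>
          cmod (P y y - exp (\<i> * of_real ?u)) + cmod (P y y - exp (\<i> * of_real ?v))"
      by (metis norm_minus_commute norm_triangle_ineq4 diff_add_cancel norm_diff_triangle_le order_refl)
    also have "\<dots> \<le> \<epsilon> + \<epsilon>" using ca ca' y by (intro add_mono) auto
    finally have "cmod (exp (\<i> * of_real ?u) - exp (\<i> * of_real ?v)) \<le> 2 * \<epsilon>" by simp
    moreover have "\<bar>?u - ?v\<bar> \<le> 2 * cmod (exp (\<i> * of_real ?u) - exp (\<i> * of_real ?v))"
      using ph_range[OF a R, of y] ph_range[OF a' R, of y] by (intro exp_sep) auto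
    ultimately show "\<bar>?u - ?v\<bar> \<le> 4 * \<epsilon>" by simp
  qed
  from recover_diff[OF this j] have "\<bar>coef n R a j - coef n R a' j\<bar> \<le> 8 * \<epsilon>" by simp
  moreover have "coef n R a j - coef n R a' j = (real (a j) - real (a' j)) / (real R * 2 ^ (n + 1))"
    by (simp add: coef_def diff_divide_distrib)
  ultimately have "\<bar>real (a j) - real (a' j)\<bar> / (real R * 2 ^ (n + 1)) \<le> 8 * \<epsilon>"
    by (simp add: abs_divide)
  hence "\<bar>real (a j) - real (a' j)\<bar> \<le> 8 * \<epsilon> * (real R * 2 ^ (n + 1))"
    using R by (simp add: pos_divide_le_eq)
  thus ?thesis by (simp add: mult.assoc)
qed

definition Wq :: "nat \<Rightarrow> nat \<Rightarrow> nat \<Rightarrow> nat" where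
  "Wq n m d = nat \<lceil>8 * Kc (n + m) (d * (n + m)) * 2 ^ (n + 1)\<rceil>"

definition Cv :: "nat \<Rightarrow> nat \<Rightarrow> nat \<Rightarrow> nat \<Rightarrow> (nat set \<times> qop) list \<Rightarrow> (nat \<Rightarrow> nat) set" where
  "Cv n R m d rs = {a \<in> Tset n R. \<forall>y\<in>basis n.
     cmod (mp (n + m) (map gate_mat rs) y y - exp (\<i> * of_real (phs n (coef n R a) y)))
        \<le> Kc (n + m) (d * (n + m)) / R}"

lemma finite_Tset: "finite (Tset n R)" by (simp add: Tset_def finite_PiE)

lemma card_Tset: "card (Tset n R) = R ^ (2 ^ n - 1)"
  by (simp add: Tset_def card_PiE)

lemma card_Cv:
  assumes R: "R > 0"
  shows "card (Cv n R m d rs) \<le> (2 * Wq n m d + 1) ^ (2 ^ n - 1)"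
proof (cases "Cv n R m d rs = {}")
  case True
  then show ?thesis by simp
next
  case False
  then obtain a0 where a0: "a0 \<in> Cv n R m d rs" by blast
  define W where "W = Wq n m d"
  define I where "I = {1..<(2::nat) ^ n}"
  have sub: "Cv n R m d rs \<subseteq> PiE I (\<lambda>j. {a0 j - W..a0 j + W})"
  proof
    fix a assume a: "a \<in> Cv n R m d rs"
    have aT: "a \<in> Tset n R" and a0T: "a0 \<in> Tset n R" using a a0 by (auto simp: Cv_def)
    show "a \<in> PiE I (\<lambda>j. {a0 j - W..a0 j + W})"
    proof (rule PiE_I)
      fix j assume j: "j \<in> I"
      have "\<bar>real (a j) - real (a0 j)\<bar> \<le> 8 * (Kc (n + m) (d * (n + m)) / R) * R * 2 ^ (n + 1)"
        by (rule close_pair[OF aT a0T R]) (use a a0 j in \<open>auto simp: Cv_def I_def\<close>)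
      also have "\<dots> = 8 * Kc (n + m) (d * (n + m)) * 2 ^ (n + 1)" using R by simp
      also have "\<dots> \<le> real W" unfolding W_def Wq_def by linarith
      finally have "\<bar>real (a j) - real (a0 j)\<bar> \<le> real W" .
      thus "a j \<in> {a0 j - W..a0 j + W}" by auto
    next
      fix j assume j: "j \<notin> I"
      have aT': "a \<in> PiE I (\<lambda>_. {1..R})" using aT by (simp add: Tset_def I_def)
      show "a j = undefined" by (rule PiE_arb[OF aT' j])
    qed
  qed
  have "card (Cv n R m d rs) \<le> card (PiE I (\<lambda>j. {a0 j - W..a0 j + W}))"
    by (rule card_mono[OF _ sub]) (simp add: finite_PiE I_def)
  also have "\<dots> = (\<Prod>j\<in>I. card {a0 j - W..a0 j + W})" by (simp add: card_PiE I_def)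
  also have "\<dots> \<le> (\<Prod>j\<in>I. 2 * W + 1)" by (intro prod_mono) auto
  also have "\<dots> = (2 * W + 1) ^ (2 ^ n - 1)" by (simp add: I_def)
  finally show ?thesis by (simp add: W_def)
qed

definition Q :: "nat \<Rightarrow> (nat \<times> nat) set" where
  "Q n = {(m, d). 1 \<le> d \<and> 32 * d * (n + m) + 2 \<le> 2 ^ n}"

lemma finite_Q: "finite (Q n)"
proof (rule finite_subset)
  show "Q n \<subseteq> {..<2 ^ n} \<times> {..<2 ^ n}"
  proof
    fix q assume "q \<in> Q n"
    then obtain m d where q: "q = (m, d)" "1 \<le> d" "32 * d * (n + m) + 2 \<le> 2 ^ n" by (auto simp: Q_def)
    have "1 * (n + m) \<le> (32 * d) * (n + m)" by (rule mult_le_mono1) (use q(2) in simp)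
    hence "n + m \<le> 32 * d * (n + m)" by simp
    hence "m \<le> 32 * d * (n + m)" by linarith
    moreover have "d \<le> 32 * d * (n + m)"
    proof -
      have "n + m \<noteq> 0"
      proof
        assume "n + m = 0"
        hence "n = 0" "m = 0" by auto
        thus False using q(3) by simp
      qed
      hence "1 \<le> 32 * (n + m)" by presburger
      hence "d * 1 \<le> d * (32 * (n + m))" by (rule mult_le_mono2)
      moreover have "d * (32 * (n + m)) = 32 * d * (n + m)" by simp
      ultimately show ?thesis by linarith
    qed
    ultimately have "m < 2 ^ n" "d < 2 ^ n" using q(3) by linarith+
    thus "q \<in> {..<2 ^ n} \<times> {..<2 ^ n}" using q(1) by auto
  qed
qed simp

definition Cq :: "nat \<Rightarrow> nat \<Rightarrow> nat \<Rightarrow> nat" where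
  "Cq n m d = (d * (n + m) + 1) * 2 ^ ((n + m) * (d * (n + m))) * 3 ^ (32 * (d * (n + m))) *
     (2 * Wq n m d + 1) ^ (2 ^ n - 1)"

definition Ctot :: "nat \<Rightarrow> nat" where
  "Ctot n = (\<Sum>q\<in>Q n. Cq n (fst q) (snd q))"

definition Bad :: "nat \<Rightarrow> nat \<Rightarrow> (nat \<Rightarrow> nat) set" where
  "Bad n R = (\<Union>q\<in>Q n. \<Union>rs\<in>RC R (n + fst q) (snd q * (n + fst q)). Cv n R (fst q) (snd q) rs)"

lemma card_RC_bound:
  assumes "(m, d) \<in> Q n" "R \<ge> 1"
  shows "card (RC R (n + m) (d * (n + m))) \<le>
     (d * (n + m) + 1) * 2 ^ ((n + m) * (d * (n + m))) * 3 ^ (32 * (d * (n + m))) * R ^ (2 ^ n - 2)"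
proof -
  define N where "N = n + m"
  define L where "L = d * N"
  have "32 * d * (n + m) + 2 \<le> 2 ^ n" using assms(1) by (simp add: Q_def)
  hence L: "32 * L \<le> 2 ^ n - 2" unfolding L_def N_def by (simp only: mult.assoc)
  have "card (RC R N L) \<le> (L + 1) * (2 ^ N * (2 * R + 1) ^ 32) ^ L" using RC_fin_card by blast
  also have "\<dots> = (L + 1) * 2 ^ (N * L) * (2 * R + 1) ^ (32 * L)"
    unfolding power_mult power_mult_distrib by (simp only: mult.assoc)
  also have "\<dots> \<le> (L + 1) * 2 ^ (N * L) * (3 * R) ^ (32 * L)"
    using assms(2) by (intro mult_le_mono2 power_mono) auto
  also have "\<dots> = (L + 1) * 2 ^ (N * L) * 3 ^ (32 * L) * R ^ (32 * L)"
    by (simp add: power_mult_distrib)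
  also have "\<dots> \<le> (L + 1) * 2 ^ (N * L) * 3 ^ (32 * L) * R ^ (2 ^ n - 2)"
    using assms(2) L by (intro mult_le_mono2 power_increasing) auto
  finally show ?thesis by (simp add: N_def L_def)
qed

lemma Bad_sub: "Bad n R \<subseteq> Tset n R"
  by (auto simp: Bad_def Cv_def)

lemma card_Bad:
  assumes "R \<ge> 1"
  shows "card (Bad n R) \<le> Ctot n * R ^ (2 ^ n - 2)"
proof -
  have "card (Bad n R) \<le> (\<Sum>q\<in>Q n. card (\<Union>rs\<in>RC R (n + fst q) (snd q * (n + fst q)). Cv n R (fst q) (snd q) rs))"
    unfolding Bad_def by (rule card_UN_le[OF finite_Q])
  also have "\<dots> \<le> (\<Sum>q\<in>Q n. Cq n (fst q) (snd q) * R ^ (2 ^ n - 2))"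
  proof (rule sum_mono)
    fix q assume q: "q \<in> Q n"
    obtain m d where md: "q = (m, d)" by (cases q)
    have "card (\<Union>rs\<in>RC R (n + m) (d * (n + m)). Cv n R m d rs) \<le>
          (\<Sum>rs\<in>RC R (n + m) (d * (n + m)). card (Cv n R m d rs))"
      using RC_fin_card by (intro card_UN_le) blast
    also have "\<dots> \<le> (\<Sum>rs\<in>RC R (n + m) (d * (n + m)). (2 * Wq n m d + 1) ^ (2 ^ n - 1))"
      using assms by (intro sum_mono card_Cv) auto
    also have "\<dots> = card (RC R (n + m) (d * (n + m))) * (2 * Wq n m d + 1) ^ (2 ^ n - 1)" by simp
    also have "\<dots> \<le> (d * (n + m) + 1) * 2 ^ ((n + m) * (d * (n + m))) * 3 ^ (32 * (d * (n + m))) *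
          R ^ (2 ^ n - 2) * (2 * Wq n m d + 1) ^ (2 ^ n - 1)"
      by (intro mult_le_mono1 card_RC_bound) (use q md assms in auto)
    also have "\<dots> = Cq n m d * R ^ (2 ^ n - 2)" by (simp add: Cq_def algebra_simps)
    finally show "card (\<Union>rs\<in>RC R (n + fst q) (snd q * (n + fst q)). Cv n R (fst q) (snd q) rs)
        \<le> Cq n (fst q) (snd q) * R ^ (2 ^ n - 2)" by (simp add: md)
  qed
  also have "\<dots> = Ctot n * R ^ (2 ^ n - 2)" by (simp add: Ctot_def sum_distrib_right)
  finally show ?thesis .
qed

lemma good_a:
  assumes "n \<ge> 1"
  shows "\<exists>R>0. \<exists>a\<in>Tset n R. a \<notin> Bad n R"
proof -
  define R where "R = Ctot n + 1"
  have R1: "R \<ge> 1" by (simp add: R_def)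
  have e: "2 ^ n - 1 = Suc (2 ^ n - 2)"
  proof -
    have "(2::nat) ^ n \<ge> 2 ^ 1" by (rule power_increasing) (use assms in auto)
    thus ?thesis by simp
  qed
  have "card (Bad n R) \<le> Ctot n * R ^ (2 ^ n - 2)" by (rule card_Bad[OF R1])
  also have "\<dots> < R * R ^ (2 ^ n - 2)" using R1 by (simp add: R_def)
  also have "\<dots> = card (Tset n R)" unfolding card_Tset e by simp
  finally have lt: "card (Bad n R) < card (Tset n R)" .
  have "\<not> Tset n R \<subseteq> Bad n R"
  proof
    assume "Tset n R \<subseteq> Bad n R"
    hence "card (Tset n R) \<le> card (Bad n R)"
      by (intro card_mono) (use finite_subset[OF Bad_sub finite_Tset] in auto)
    thus False using lt by simp
  qed
  then obtain a where a: "a \<in> Tset n R" "a \<notin> Bad n R" by blast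
  show ?thesis using R1 a by (intro exI[of _ R]) auto
qed

lemma bls1: "n \<ge> 1 \<Longrightarrow> bls n 1 = [0]"
proof -
  assume n: "n \<ge> 1"
  have "[0..<n] = 0 # [1..<n]" using n by (simp add: upt_conv_Cons)
  moreover have "filter (bit (1::nat)) [1..<n] = []"
  proof -
    have "\<not> bit (1::nat) x" if "x \<ge> 1" for x
    proof -
      have "(1::nat) < 2 ^ x" using that by (intro one_less_power) auto
      thus ?thesis by (simp add: bit_iff_odd div_less)
    qed
    thus ?thesis by (auto simp: filter_empty_conv)
  qed
  ultimately show ?thesis by (simp add: bls_def bit_0)
qed

lemma good_exists:
  assumes n: "n \<ge> 1"
  shows "\<exists>c. \<forall>m d M. circuit_of_depth (n + m) d M \<longrightarrow> embeds n m (cop n (circ n c)) M \<longrightarrow>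
           (2::nat) ^ n \<le> 33 * d * (n + m)"
proof -
  obtain R a where R: "R > 0" and aT: "a \<in> Tset n R" and aB: "a \<notin> Bad n R"
    using good_a[OF n] by blast
  define c where "c = coef n R a"
  have diag: "M y y = exp (\<i> * of_real (phs n c y))" if "embeds n m (cop n (circ n c)) M" "y \<in> basis n" for m M y
    using embed_diag[OF that] circ_diag[OF that(2)] by simp
  show ?thesis
  proof (intro exI[of _ c] allI impI)
    fix m d M assume circ: "circuit_of_depth (n + m) d M" and emb: "embeds n m (cop n (circ n c)) M"
    show "(2::nat) ^ n \<le> 33 * d * (n + m)"
    proof (cases "d = 0")
      case True
      define y0 :: bits where "y0 k = (k = 0)" for k
      have y0: "y0 \<in> basis n" using n by (auto simp: basis_on_def y0_def)
      have y0N: "y0 \<in> basis (n + m)" using basis_mono[OF _ y0, of "n + m"] by simp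
      obtain Ls where "length Ls = d" "\<forall>x\<in>basis (n + m). \<forall>y\<in>basis (n + m).
          M x y = foldr (\<lambda>L A. matmul (n + m) (layer_op (n + m) L) A) Ls idm x y"
        using circ by (auto simp: circuit_of_depth_def)
      hence "M y0 y0 = 1" using True y0N by (simp add: idm_def)
      hence e: "exp (\<i> * of_real (phs n c y0)) = 1" using diag[OF emb y0] by simp
      have rng: "0 \<le> phs n c y0 \<and> phs n c y0 \<le> 1 / 2" using ph_range[OF aT R] by (simp add: c_def)
      have "\<bar>phs n c y0 - 0\<bar> \<le> 2 * cmod (exp (\<i> * of_real (phs n c y0)) - exp (\<i> * of_real 0))"
        using rng by (intro exp_sep) auto
      hence z: "phs n c y0 = 0" using e by simp
      have one: "(1::nat) \<in> {1..<2 ^ n}"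
      proof -
        have "(2::nat) ^ 1 \<le> 2 ^ n" by (rule power_increasing) (use n in auto)
        thus ?thesis by simp
      qed
      have xr1: "xr y0 (bls n 1)" unfolding bls1[OF n] by (simp add: y0_def)
      have "c 1 = (if xr y0 (bls n 1) then c 1 else 0)" by (simp only: xr1 if_True)
      also have "\<dots> \<le> phs n c y0"
        unfolding phs_def using coef_range[OF aT R] one
        by (intro member_le_sum) (auto simp: c_def)
      finally have "c 1 \<le> 0" using z by simp
      moreover have "c 1 > 0"
      proof -
        have "a 1 \<ge> 1" using aT one by (auto simp: Tset_def PiE_iff)
        thus ?thesis using R by (simp add: c_def coef_def)
      qed
      ultimately show ?thesis by simp
    next
      case False
      show ?thesis
      proof (cases "(m, d) \<in> Q n")
        case True
        obtain rs where rs: "rs \<in> RC R (n + m) (d * (n + m))"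
          and close: "\<forall>x\<in>basis (n + m). \<forall>y\<in>basis (n + m).
            cmod (mp (n + m) (map gate_mat rs) x y - M x y) \<le> Kc (n + m) (d * (n + m)) / R"
          using circuit_approx[OF circ R] by blast
        have "a \<in> Cv n R m d rs"
          unfolding Cv_def
        proof (intro CollectI conjI ballI)
          show "a \<in> Tset n R" by (rule aT)
          fix y assume y: "y \<in> basis n"
          have yN: "y \<in> basis (n + m)" using basis_mono[OF _ y, of "n + m"] by simp
          show "cmod (mp (n + m) (map gate_mat rs) y y - exp (\<i> * of_real (phs n (coef n R a) y)))
             \<le> Kc (n + m) (d * (n + m)) / R"
          proof -
            have "cmod (mp (n + m) (map gate_mat rs) y y - M y y) \<le> Kc (n + m) (d * (n + m)) / R"
              using close yN by blast
            thus ?thesis unfolding diag[OF emb y] c_def .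
          qed
        qed
        hence "a \<in> Bad n R" using True rs unfolding Bad_def by (intro UN_I[of "(m, d)"]) auto
        thus ?thesis using aB by simp
      next
        case nQ: False
        have d1: "1 \<le> d" using False by simp
        have "\<not> (32 * d * (n + m) + 2 \<le> 2 ^ n)" using nQ d1 unfolding Q_def by blast
        hence "2 ^ n \<le> 32 * d * (n + m) + 1" by linarith
        moreover have "1 \<le> d * (n + m)" using d1 n by simp
        ultimately show ?thesis by linarith
      qed
    qed
  qed
qed

theorem corollary1:
  "\<exists>C :: nat \<Rightarrow> cgate list.
     (\<forall>n\<ge>1. cnot_diag_circuit n (C n)) \<and>
     (\<forall>p :: real poly. \<exists>q :: real poly. \<forall>n\<ge>1. \<forall>m d M.
        real m \<le> poly p (real n) \<longrightarrow>
        circuit_of_depth (n + m) d M \<longrightarrow>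
        embeds n m (cop n (C n)) M \<longrightarrow>
        2 ^ n \<le> real d * poly q (real n))"
proof -
  define P where "P n c \<longleftrightarrow> (\<forall>m d M. circuit_of_depth (n + m) d M \<longrightarrow> embeds n m (cop n (circ n c)) M \<longrightarrow>
           (2::nat) ^ n \<le> 33 * d * (n + m))" for n c
  define C where "C n = circ n (SOME c. P n c)" for n
  have PC: "P n (SOME c. P n c)" if n: "n \<ge> 1" for n
  proof -
    have "\<exists>c. P n c" using good_exists[OF n] unfolding P_def .
    thus ?thesis by (rule someI_ex)
  qed
  show ?thesis
  proof (intro exI[of _ C] conjI allI impI)
    fix n :: nat show "cnot_diag_circuit n (C n)" by (simp add: C_def circ_ok)
  next
    fix p :: "real poly"
    show "\<exists>q :: real poly. \<forall>n\<ge>1. \<forall>m d M. real m \<le> poly p (real n) \<longrightarrow>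
        circuit_of_depth (n + m) d M \<longrightarrow> embeds n m (cop n (C n)) M \<longrightarrow>
        2 ^ n \<le> real d * poly q (real n)"
    proof (intro exI[of _ "smult 33 (pCons 0 1 + p)"] allI impI)
      fix n m d M
      assume n: "n \<ge> 1" and mp: "real m \<le> poly p (real n)"
        and circ: "circuit_of_depth (n + m) d M" and emb: "embeds n m (cop n (C n)) M"
      have emb': "embeds n m (cop n (circ n (SOME c. P n c))) M" using emb by (simp only: C_def)
      have "(2::nat) ^ n \<le> 33 * d * (n + m)" using PC[OF n] circ emb' unfolding P_def by blast
      hence "real ((2::nat) ^ n) \<le> real (33 * d * (n + m))" by (simp only: of_nat_le_iff)
      hence "(2::real) ^ n \<le> 33 * real d * (real n + real m)" by simp
      also have "\<dots> \<le> 33 * real d * (real n + poly p (real n))"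
        using mp by (intro mult_left_mono) simp_all
      also have "\<dots> = real d * poly (smult 33 (pCons 0 1 + p)) (real n)" by simp
      finally show "2 ^ n \<le> real d * poly (smult 33 (pCons 0 1 + p)) (real n)" .
    qed
  qed
qed

end
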